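(* Let $\mathcal{H}$ be a separable complex Hilbert space, $H$ a self-adjoint operator on $\mathcal{H}$, $\hbar>0$ a constant, and $\psi\in\mathcal{H}$ a unit vector in the domain of $H$. For $t\in\mathbb{R}$ let $p(t)=\left|\langle \psi | e^{-\mathrm{i} tH/\hbar}\psi\rangle\right|^2$, and for $\alpha\ge 0$, $\tau\in\mathbb{R}$ and positive integers $N$ let $p_{N,\alpha}(\tau)=p(\tau N^{\alpha-1})^N$. Then: (i) if $0\le \alpha<1/2$, then $\lim_{N\to+\infty}p_{N,\alpha}(\tau)=1$, uniformly in $\tau$ on compact subsets of $\mathbb{R}$; (ii) if $\alpha=1/2$, then $\lim_{N\to+\infty}p_{N,1/2}(\tau)=\exp(-\tau^2/\tau_Z^2)$, uniformly in $\tau$ on compact subsets of $\mathbb{R}$, where $\tau_Z^{-2}=\frac{1}{\hbar^2}\left(\langle H\psi|H\psi\rangle-\langle\psi|H\psi\rangle^2\right)$; (iii) if $1/2<\alpha<1$ and $\psi$ is not an eigenvector of $H$, then $\lim_{N\to+\infty}p_{N,\alpha}(\tau)=0$, uniformly in $\tau$ on compact subsets of $\mathbb{R}\setminus\{0\}$.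
   Context: $\langle\cdot|\cdot\rangle$ denotes the inner product of $\mathcal{H}$ (linear in the second argument), and $e^{-\mathrm{i}tH/\hbar}$ is the unitary group generated by $H$ via the spectral theorem. The quantity $\langle H\psi|H\psi\rangle-\langle\psi|H\psi\rangle^2$ is the variance of $H$ in $\psi$; it vanishes exactly when $\psi$ is an eigenvector, in which case $\tau_Z^{-2}=0$ and the formula in (ii) reads $1$. *)

theory Defs
  imports "HOL-Analysis.Analysis"
begin

text \<open>The library has no complex inner product spaces, so we introduce a class:
a real Banach space equipped with a complex scalar multiplication extending the
real one, and a complex inner product (linear in the second argument,
conjugate-symmetric, positive definite) inducing the norm.\<close>

class chilbert_space = banach +
  fixes scaleC :: "complex \<Rightarrow> 'a \<Rightarrow> 'a"
    and cinner :: "'a \<Rightarrow> 'a \<Rightarrow> complex"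
  assumes scaleC_add_right: "scaleC a (x + y) = scaleC a x + scaleC a y"
    and scaleC_add_left: "scaleC (a + b) x = scaleC a x + scaleC b x"
    and scaleC_scaleC: "scaleC a (scaleC b x) = scaleC (a * b) x"
    and scaleC_one: "scaleC 1 x = x"
    and scaleR_scaleC: "scaleR r x = scaleC (complex_of_real r) x"
    and cinner_conj: "cinner x y = cnj (cinner y x)"
    and cinner_add_right: "cinner x (y + z) = cinner x y + cinner x z"
    and cinner_scaleC_right: "cinner x (scaleC a y) = a * cinner x y"
    and cinner_nonneg: "0 \<le> Re (cinner x x)"
    and cinner_eq_zero: "cinner x x = 0 \<Longrightarrow> x = 0"
    and norm_cinner: "norm x = sqrt (Re (cinner x x))"

definition separable_space :: "'a::topological_space itself \<Rightarrow> bool" where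
  "separable_space _ \<longleftrightarrow> (\<exists>S::'a set. countable S \<and> closure S = UNIV)"

text \<open>An operator is a pair of a domain D and a map H (values outside D are irrelevant).\<close>

definition clinear_on :: "'a::chilbert_space set \<Rightarrow> ('a \<Rightarrow> 'b::chilbert_space) \<Rightarrow> bool" where
  "clinear_on D H \<longleftrightarrow>
     (0 \<in> D \<and> (\<forall>x\<in>D. \<forall>y\<in>D. x + y \<in> D) \<and> (\<forall>a. \<forall>x\<in>D. scaleC a x \<in> D) \<and>
      (\<forall>x\<in>D. \<forall>y\<in>D. H (x + y) = H x + H y) \<and>
      (\<forall>a. \<forall>x\<in>D. H (scaleC a x) = scaleC a (H x)))"

text \<open>H is densely defined, linear, and equals its adjoint H*: the domain of H* is
  {y | exists z. for all x in D, <Hx|y> = <x|z>} and H* y is that z.\<close>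

definition self_adjoint :: "'a::chilbert_space set \<Rightarrow> ('a \<Rightarrow> 'a) \<Rightarrow> bool" where
  "self_adjoint D H \<longleftrightarrow>
     clinear_on D H \<and> closure D = UNIV \<and>
     D = {y. \<exists>z. \<forall>x\<in>D. cinner (H x) y = cinner x z} \<and>
     (\<forall>x\<in>D. \<forall>y\<in>D. cinner (H x) y = cinner x (H y))"

definition unitary :: "('a::chilbert_space \<Rightarrow> 'a) \<Rightarrow> bool" where
  "unitary U \<longleftrightarrow> clinear_on UNIV U \<and> surj U \<and> (\<forall>x y. cinner (U x) (U y) = cinner x y)"

text \<open>U t = exp(-i t H / hbar): the strongly continuous one-parameter unitary group
  whose generator is -i H / hbar (with exactly D as generator domain).  By Stone's
  theorem this group exists and is unique; it coincides with the one given by the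
  spectral theorem.\<close>

definition is_evolution :: "real \<Rightarrow> 'a::chilbert_space set \<Rightarrow> ('a \<Rightarrow> 'a) \<Rightarrow> (real \<Rightarrow> 'a \<Rightarrow> 'a) \<Rightarrow> bool" where
  "is_evolution hbar D H U \<longleftrightarrow>
     (\<forall>t. unitary (U t)) \<and> U 0 = id \<and> (\<forall>s t. U (s + t) = U s \<circ> U t) \<and>
     (\<forall>x. continuous_on UNIV (\<lambda>t. U t x)) \<and>
     D = {x. \<exists>v. ((\<lambda>t. U t x) has_vector_derivative v) (at 0)} \<and>
     (\<forall>x\<in>D. ((\<lambda>t. U t x) has_vector_derivative
                 scaleC (- \<i> / complex_of_real hbar) (H x)) (at 0))"

definition surv_prob :: "(real \<Rightarrow> 'a::chilbert_space \<Rightarrow> 'a) \<Rightarrow> 'a \<Rightarrow> real \<Rightarrow> real" where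
  "surv_prob U \<psi> t = (cmod (cinner \<psi> (U t \<psi>)))^2"

definition pN :: "(real \<Rightarrow> 'a::chilbert_space \<Rightarrow> 'a) \<Rightarrow> 'a \<Rightarrow> real \<Rightarrow> nat \<Rightarrow> real \<Rightarrow> real" where
  "pN U \<psi> \<alpha> N \<tau> = surv_prob U \<psi> (\<tau> * real N powr (\<alpha> - 1)) ^ N"

end

theory Submission
  imports Defs "HOL-Real_Asymp.Real_Asymp"
begin


lemma cinner_add_left: "cinner (x + y) z = cinner x z + (cinner y z :: complex)"
  for x y z :: "'a::chilbert_space"
  by (metis cinner_conj cinner_add_right complex_cnj_add)

lemma cinner_scaleC_left: "cinner (scaleC a x) y = cnj a * cinner x y"
  for x y :: "'a::chilbert_space"
  by (metis cinner_conj cinner_scaleC_right complex_cnj_mult complex_cnj_cnj)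

lemma scaleC_m1: "scaleC (-1) x = - x" for x :: "'a::chilbert_space"
  using scaleR_scaleC[of "-1" x] by simp

lemma cinner_minus_right: "cinner x (- y) = - cinner x y" for x y :: "'a::chilbert_space"
  using cinner_scaleC_right[of x "-1" y] by (simp add: scaleC_m1)

lemma cinner_minus_left: "cinner (- x) y = - cinner x y" for x y :: "'a::chilbert_space"
  using cinner_scaleC_left[of "-1" x y] by (simp add: scaleC_m1)

lemma cinner_diff_right: "cinner x (y - z) = cinner x y - cinner x z" for x y z :: "'a::chilbert_space"
  unfolding diff_conv_add_uminus cinner_add_right cinner_minus_right by (rule refl)

lemma cinner_diff_left: "cinner (x - y) z = cinner x z - cinner y z" for x y z :: "'a::chilbert_space"
  unfolding diff_conv_add_uminus cinner_add_left cinner_minus_left by (rule refl)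

lemma Re_cinner_sym: "Re (cinner y x) = Re (cinner x y)" for x y :: "'a::chilbert_space"
  by (subst cinner_conj) simp

lemma norm_sq: "norm x ^ 2 = Re (cinner x x)" for x :: "'a::chilbert_space"
  using norm_cinner[of x] cinner_nonneg[of x] by simp

lemma cinner_self: "cinner x x = complex_of_real (norm x ^ 2)" for x :: "'a::chilbert_space"
proof (rule complex_eqI)
  have "Im (cinner x x) = Im (cnj (cinner x x))" using cinner_conj[of x x] by simp
  then show "Im (cinner x x) = Im (complex_of_real (norm x ^ 2))" by simp
qed (simp add: norm_sq)

lemma norm_diff_sq: "norm (x - y)^2 = norm x^2 + norm y^2 - 2 * Re (cinner x y)"
  for x y :: "'a::chilbert_space"
  using Re_cinner_sym[of x y]
  by (simp add: norm_sq cinner_diff_left cinner_diff_right)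

lemma norm_add_sq: "norm (x + y)^2 = norm x^2 + norm y^2 + 2 * Re (cinner x y)"
  for x y :: "'a::chilbert_space"
  using Re_cinner_sym[of x y]
  by (simp add: norm_sq cinner_add_left cinner_add_right)

lemma norm_scaleC: "norm (scaleC a x) = cmod a * norm x" for x :: "'a::chilbert_space"
proof -
  have "cinner (scaleC a x) (scaleC a x) = cnj a * a * cinner x x"
    by (simp add: cinner_scaleC_left cinner_scaleC_right)
  then have "norm (scaleC a x)^2 = Re (cnj a * a * cinner x x)"
    by (simp only: norm_sq)
  also have "cnj a * a = complex_of_real (cmod a ^ 2)"
    by (metis complex_norm_square mult.commute)
  finally have "norm (scaleC a x)^2 = (cmod a * norm x)^2"
    by (simp add: norm_sq power_mult_distrib)
  then show ?thesis by (simp add: power2_eq_iff_nonneg)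
qed

lemma scaleC_diff: "scaleC c (a - b) = scaleC c a - scaleC c (b :: 'a::chilbert_space)"
proof -
  have "scaleC c (scaleC (-1) b) = scaleC (-1) (scaleC c b)"
    by (simp add: scaleC_scaleC mult.commute)
  then show ?thesis
    unfolding diff_conv_add_uminus scaleC_add_right scaleC_m1[symmetric] by simp
qed

lemma tendsto_scaleC:
  fixes g :: "'b \<Rightarrow> 'a::chilbert_space"
  assumes "(g \<longlongrightarrow> l) F"
  shows "((\<lambda>t. scaleC c (g t)) \<longlongrightarrow> scaleC c l) F"
proof -
  have "((\<lambda>t. dist (g t) l) \<longlongrightarrow> 0) F" using assms tendsto_dist_iff by blast
  then have "((\<lambda>t. cmod c * dist (g t) l) \<longlongrightarrow> 0) F" by (rule tendsto_mult_right_zero)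
  then show ?thesis
    by (subst tendsto_dist_iff) (simp add: dist_norm scaleC_diff[symmetric] norm_scaleC)
qed

lemma Re_cinner_formula: "Re (cinner a y) = (norm (a + y)^2 - norm a^2 - norm y^2)/2"
  for a y :: "'a::chilbert_space"
  by (simp add: norm_add_sq)

lemma tendsto_Re_cinner:
  fixes g :: "'b \<Rightarrow> 'a::chilbert_space"
  assumes "(g \<longlongrightarrow> l) F"
  shows "((\<lambda>t. Re (cinner a (g t))) \<longlongrightarrow> Re (cinner a l)) F"
  unfolding Re_cinner_formula by (intro tendsto_intros assms) auto

lemma Im_cinner_eq: "Im (cinner a y) = Re (cinner a (scaleC (-\<i>) y))"
  for a y :: "'a::chilbert_space"
  by (simp add: cinner_scaleC_right)

lemma tendsto_Im_cinner:
  fixes g :: "'b \<Rightarrow> 'a::chilbert_space"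
  assumes "(g \<longlongrightarrow> l) F"
  shows "((\<lambda>t. Im (cinner a (g t))) \<longlongrightarrow> Im (cinner a l)) F"
  unfolding Im_cinner_eq by (intro tendsto_Re_cinner tendsto_scaleC assms)



lemma bdd_zero:
  fixes a b :: "'x \<Rightarrow> real"
  assumes "eventually (\<lambda>n. \<bar>a n\<bar> \<le> B) F" "(b \<longlongrightarrow> 0) F"
  shows "((\<lambda>n. a n * b n) \<longlongrightarrow> 0) F"
proof (rule Lim_null_comparison)
  show "eventually (\<lambda>n. norm (a n * b n) \<le> \<bar>B\<bar> * \<bar>b n\<bar>) F"
    using assms(1) by eventually_elim (auto simp: abs_mult intro!: mult_right_mono)
  have "((\<lambda>n. \<bar>B\<bar> * \<bar>b n\<bar>) \<longlongrightarrow> \<bar>B\<bar> * \<bar>0\<bar>) F"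
    by (intro tendsto_intros assms(2))
  then show "((\<lambda>n. \<bar>B\<bar> * \<bar>b n\<bar>) \<longlongrightarrow> 0) F" by simp
qed

lemma unif_seq:
  fixes f :: "nat \<Rightarrow> 'b \<Rightarrow> real" and g :: "'b \<Rightarrow> real"
  assumes "\<And>\<tau>s. (\<And>n. \<tau>s n \<in> K) \<Longrightarrow> ((\<lambda>n. f n (\<tau>s n) - g (\<tau>s n)) \<longlongrightarrow> 0) sequentially"
  shows "uniform_limit K f g sequentially"
  unfolding uniform_limit_iff
proof (intro allI impI)
  fix e :: real assume e: "e > 0"
  show "\<forall>\<^sub>F n in sequentially. \<forall>x\<in>K. dist (f n x) (g x) < e"
  proof (cases "K = {}")
    case True then show ?thesis by simp
  next
    case False
    define \<tau>s where "\<tau>s n = (if \<exists>x\<in>K. \<not> dist (f n x) (g x) < e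
       then SOME x. x \<in> K \<and> \<not> dist (f n x) (g x) < e else SOME x. x \<in> K)" for n
    have bad: "\<tau>s n \<in> K \<and> \<not> dist (f n (\<tau>s n)) (g (\<tau>s n)) < e" if "\<exists>x\<in>K. \<not> dist (f n x) (g x) < e" for n
    proof -
      from that have ex: "\<exists>x. x \<in> K \<and> \<not> dist (f n x) (g x) < e" by blast
      have "\<tau>s n = (SOME x. x \<in> K \<and> \<not> dist (f n x) (g x) < e)"
        using that unfolding \<tau>s_def by simp
      with someI_ex[OF ex] show ?thesis by simp
    qed
    have inK: "\<tau>s n \<in> K" for n
    proof (cases "\<exists>x\<in>K. \<not> dist (f n x) (g x) < e")
      case True then show ?thesis using bad by blast
    next
      case nb: False
      from False have ex: "\<exists>x. x \<in> K" by blast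
      have "\<tau>s n = (SOME x. x \<in> K)" using nb unfolding \<tau>s_def by simp
      with someI_ex[OF ex] show ?thesis by simp
    qed
    have "((\<lambda>n. f n (\<tau>s n) - g (\<tau>s n)) \<longlongrightarrow> 0) sequentially"
      using assms inK by blast
    then have "eventually (\<lambda>n. dist (f n (\<tau>s n) - g (\<tau>s n)) 0 < e) sequentially"
      using e tendstoD by blast
    then show ?thesis
    proof eventually_elim
      case (elim n)
      then show ?case using bad[of n] by (auto simp: dist_real_def)
    qed
  qed
qed

lemma exp_diff_zero:
  fixes a b :: "nat \<Rightarrow> real"
  assumes "((\<lambda>n. a n - b n) \<longlongrightarrow> 0) sequentially" "eventually (\<lambda>n. \<bar>b n\<bar> \<le> B) sequentially"
  shows "((\<lambda>n. exp (a n) - exp (b n)) \<longlongrightarrow> 0) sequentially"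
proof -
  have e1: "eventually (\<lambda>n. \<bar>exp (b n)\<bar> \<le> exp B) sequentially"
    using assms(2) by eventually_elim auto
  have "((\<lambda>n. exp (a n - b n) - 1) \<longlongrightarrow> exp 0 - 1) sequentially"
    by (intro tendsto_intros assms(1))
  then have "((\<lambda>n. exp (a n - b n) - 1) \<longlongrightarrow> 0) sequentially" by simp
  from bdd_zero[OF e1 this] show ?thesis
    by (simp add: algebra_simps exp_add[symmetric])
qed

lemma log_lemma:
  fixes x c b :: "nat \<Rightarrow> real"
  assumes x0: "(x \<longlongrightarrow> 0) sequentially"
    and c: "eventually (\<lambda>n. c n = real n * x n) sequentially"
    and bB: "eventually (\<lambda>n. \<bar>b n\<bar> \<le> B) sequentially"
    and cb: "((\<lambda>n. c n + b n) \<longlongrightarrow> 0) sequentially"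
  shows "((\<lambda>n. (1 - x n) ^ n - exp (b n)) \<longlongrightarrow> 0) sequentially"
proof -
  have xs: "eventually (\<lambda>n. \<bar>x n\<bar> \<le> 1/2) sequentially"
  proof -
    have "eventually (\<lambda>n. dist (x n) 0 < 1/2) sequentially" by (rule tendstoD[OF x0]) simp
    then show ?thesis by eventually_elim (auto simp: dist_real_def)
  qed
  have cbd: "eventually (\<lambda>n. \<bar>c n + b n\<bar> < 1) sequentially"
  proof -
    have "eventually (\<lambda>n. dist (c n + b n) 0 < 1) sequentially" by (rule tendstoD[OF cb]) simp
    then show ?thesis by eventually_elim (auto simp: dist_real_def)
  qed
  have cB: "eventually (\<lambda>n. \<bar>c n\<bar> \<le> B + 1) sequentially"
    using cbd bB by eventually_elim auto
  have cx: "((\<lambda>n. \<bar>c n\<bar> * \<bar>x n\<bar>) \<longlongrightarrow> 0) sequentially"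
    using bdd_zero[of "\<lambda>n. \<bar>c n\<bar>" "B+1" sequentially "\<lambda>n. \<bar>x n\<bar>"] cB tendsto_rabs_zero[OF x0]
    by simp
  define r where "r n = ln (1 - x n) + x n" for n
  have rb: "eventually (\<lambda>n. norm (real n * r n) \<le> 2 * (\<bar>c n\<bar> * \<bar>x n\<bar>)) sequentially"
    using xs c
  proof eventually_elim
    case (elim n)
    have "\<bar>ln (1 + (- x n)) - (- x n)\<bar> \<le> 2 * (- x n)\<^sup>2"
      by (rule abs_ln_one_plus_x_minus_x_bound) (use elim in simp)
    then have "\<bar>r n\<bar> \<le> 2 * (x n)\<^sup>2" by (simp add: r_def)
    then have "real n * \<bar>r n\<bar> \<le> real n * (2 * (x n)\<^sup>2)" by (intro mult_left_mono) auto
    then show ?case using elim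
      by (simp add: abs_mult power2_eq_square algebra_simps)
  qed
  have nr: "((\<lambda>n. real n * r n) \<longlongrightarrow> 0) sequentially"
    by (rule Lim_null_comparison[OF rb]) (use tendsto_mult_right_zero[OF cx, of 2] in simp)
  have "((\<lambda>n. real n * r n - (c n + b n)) \<longlongrightarrow> 0 - 0) sequentially"
    by (intro tendsto_intros nr cb)
  moreover have "eventually (\<lambda>n. real n * r n - (c n + b n) = real n * ln (1 - x n) - b n) sequentially"
    using c by eventually_elim (simp add: r_def algebra_simps)
  ultimately have "((\<lambda>n. real n * ln (1 - x n) - b n) \<longlongrightarrow> 0) sequentially"
    using tendsto_cong by fastforce
  from exp_diff_zero[OF this bB]
  have "((\<lambda>n. exp (real n * ln (1 - x n)) - exp (b n)) \<longlongrightarrow> 0) sequentially" .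
  moreover have "eventually (\<lambda>n. exp (real n * ln (1 - x n)) - exp (b n) = (1 - x n) ^ n - exp (b n)) sequentially"
    using xs
  proof eventually_elim
    case (elim n)
    then have "1 - x n > 0" by simp
    then show ?case by (simp add: exp_of_nat_mult)
  qed
  ultimately show ?thesis using tendsto_cong by fastforce
qed

lemma seq_common:
  fixes q :: "real \<Rightarrow> real"
  assumes "\<alpha> < 1" "\<And>n. \<bar>\<tau>s n\<bar> \<le> R" "isCont q 0" "q 0 = s"
  shows "((\<lambda>n. q (\<tau>s n * real n powr (\<alpha>-1))) \<longlongrightarrow> s) sequentially"
    and "((\<lambda>n. (\<tau>s n * real n powr (\<alpha>-1))^2 * q (\<tau>s n * real n powr (\<alpha>-1))) \<longlongrightarrow> 0) sequentially"
proof -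
  have np: "((\<lambda>n. real n powr (\<alpha>-1)) \<longlongrightarrow> 0) sequentially"
    by (rule tendsto_neg_powr[OF _ filterlim_real_sequentially]) (use assms in simp)
  have t0: "((\<lambda>n. \<tau>s n * real n powr (\<alpha>-1)) \<longlongrightarrow> 0) sequentially"
    by (rule bdd_zero[OF _ np, of _ R]) (use assms in auto)
  from isCont_tendsto_compose[OF assms(3) t0]
  show q: "((\<lambda>n. q (\<tau>s n * real n powr (\<alpha>-1))) \<longlongrightarrow> s) sequentially" using assms by simp
  have "((\<lambda>n. (\<tau>s n * real n powr (\<alpha>-1))^2 * q (\<tau>s n * real n powr (\<alpha>-1))) \<longlongrightarrow> 0^2 * s) sequentially"
    by (intro tendsto_intros t0 q)
  then show "((\<lambda>n. (\<tau>s n * real n powr (\<alpha>-1))^2 * q (\<tau>s n * real n powr (\<alpha>-1))) \<longlongrightarrow> 0) sequentially"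
    by simp
qed

lemma pow_id: "n > 0 \<Longrightarrow> real n * (\<tau> * real n powr (\<alpha> - 1))^2 = \<tau>^2 * real n powr (2*\<alpha> - 1)"
proof -
  assume n: "n > 0"
  have "real n * (real n powr (\<alpha> - 1) * real n powr (\<alpha> - 1)) = real n powr 1 * (real n powr (\<alpha> - 1) * real n powr (\<alpha> - 1))"
    using n by simp
  also have "\<dots> = real n powr (1 + ((\<alpha> - 1) + (\<alpha> - 1)))"
    by (simp only: powr_add)
  also have "1 + ((\<alpha> - 1) + (\<alpha> - 1)) = 2*\<alpha> - 1" by simp
  finally show ?thesis by (simp add: power2_eq_square algebra_simps)
qed


lemma compact_bound:
  fixes K :: "real set"
  assumes "compact K"
  obtains R where "\<And>\<tau>. \<tau> \<in> K \<Longrightarrow> \<bar>\<tau>\<bar> \<le> R"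
  using compact_imp_bounded[OF assms] unfolding bounded_iff by auto

lemma sq_bound: "\<bar>\<tau>::real\<bar> \<le> R \<Longrightarrow> \<tau>^2 \<le> R^2"
  using power_mono[of "\<bar>\<tau>\<bar>" R 2] by simp

lemma nx_id: "n > 0 \<Longrightarrow> real n * ((\<tau> * real n powr (\<alpha> - 1))^2 * Q) = \<tau>^2 * real n powr (2*\<alpha> - 1) * Q"
proof -
  assume n: "n > 0"
  have "real n * ((\<tau> * real n powr (\<alpha> - 1))^2 * Q) = (real n * (\<tau> * real n powr (\<alpha> - 1))^2) * Q"
    by (rule mult.assoc[symmetric])
  also have "real n * (\<tau> * real n powr (\<alpha> - 1))^2 = \<tau>^2 * real n powr (2*\<alpha> - 1)"
    by (rule pow_id[OF n])
  finally show ?thesis .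
qed

lemma exp_powr_lim: "k > 0 \<Longrightarrow> a > 0 \<Longrightarrow> ((\<lambda>n::nat. exp (- (k * real n powr a))) \<longlongrightarrow> 0) sequentially"
  by real_asymp

lemma sq_ev: "(\<And>n. \<bar>\<tau>s n\<bar> \<le> R) \<Longrightarrow> eventually (\<lambda>n. \<bar>(\<tau>s n :: real)^2\<bar> \<le> R^2) sequentially"
  by (intro always_eventually allI) (simp add: sq_bound)

lemma part_i:
  fixes p q :: "real \<Rightarrow> real"
  assumes pq: "\<And>t. p t = 1 - t^2 * q t" and qc: "isCont q 0" and qs: "q 0 = s"
    and al: "\<alpha> < 1/2" and K: "compact K"
  shows "uniform_limit K (\<lambda>N \<tau>. p (\<tau> * real N powr (\<alpha> - 1)) ^ N) (\<lambda>\<tau>. 1) sequentially"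
proof (rule unif_seq)
  obtain R where R: "\<And>\<tau>. \<tau> \<in> K \<Longrightarrow> \<bar>\<tau>\<bar> \<le> R" using compact_bound[OF K] by blast
  fix \<tau>s :: "nat \<Rightarrow> real" assume inK: "\<And>n. \<tau>s n \<in> K"
  have bd: "\<And>n. \<bar>\<tau>s n\<bar> \<le> R" using R inK by blast
  define t where "t n = \<tau>s n * real n powr (\<alpha>-1)" for n
  define x where "x n = (t n)^2 * q (t n)" for n
  have qt: "((\<lambda>n. q (t n)) \<longlongrightarrow> s) sequentially"
    using seq_common(1)[of \<alpha> \<tau>s R q s] al bd qc qs unfolding t_def by simp
  have x0: "(x \<longlongrightarrow> 0) sequentially"
    using seq_common(2)[of \<alpha> \<tau>s R q s] al bd qc qs unfolding t_def x_def by simp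
  have "((\<lambda>n. real n powr (2*\<alpha>-1) * q (t n)) \<longlongrightarrow> 0 * s) sequentially"
    by (intro tendsto_intros qt tendsto_neg_powr[OF _ filterlim_real_sequentially]) (use al in simp)
  then have "((\<lambda>n. (\<tau>s n)^2 * (real n powr (2*\<alpha>-1) * q (t n))) \<longlongrightarrow> 0) sequentially"
    using bdd_zero[OF sq_ev[OF bd]] by simp
  moreover have "eventually (\<lambda>n. (\<tau>s n)^2 * (real n powr (2*\<alpha>-1) * q (t n)) = real n * x n + 0) sequentially"
    using eventually_gt_at_top[of 0]
  proof eventually_elim
    case (elim n)
    have "real n * x n = (\<tau>s n)^2 * real n powr (2*\<alpha> - 1) * q (t n)"
      unfolding x_def t_def by (rule nx_id[OF elim])
    then show ?case by (simp add: algebra_simps)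
  qed
  ultimately have "((\<lambda>n. real n * x n + 0) \<longlongrightarrow> 0) sequentially"
    using tendsto_cong by fastforce
  from log_lemma[OF x0 _ _ this, of 0]
  have "((\<lambda>n. (1 - x n) ^ n - exp 0) \<longlongrightarrow> 0) sequentially" by simp
  then show "((\<lambda>n. p (\<tau>s n * real n powr (\<alpha> - 1)) ^ n - 1) \<longlongrightarrow> 0) sequentially"
    by (simp add: pq x_def t_def)
qed

lemma part_ii:
  fixes p q :: "real \<Rightarrow> real"
  assumes pq: "\<And>t. p t = 1 - t^2 * q t" and qc: "isCont q 0" and qs: "q 0 = s"
    and K: "compact K"
  shows "uniform_limit K (\<lambda>N \<tau>. p (\<tau> * real N powr (1/2 - 1)) ^ N) (\<lambda>\<tau>. exp (- (\<tau>^2) * s)) sequentially"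
proof (rule unif_seq)
  obtain R where R: "\<And>\<tau>. \<tau> \<in> K \<Longrightarrow> \<bar>\<tau>\<bar> \<le> R" using compact_bound[OF K] by blast
  fix \<tau>s :: "nat \<Rightarrow> real" assume inK: "\<And>n. \<tau>s n \<in> K"
  have bd: "\<And>n. \<bar>\<tau>s n\<bar> \<le> R" using R inK by blast
  define \<alpha> :: real where "\<alpha> = 1/2"
  define t where "t n = \<tau>s n * real n powr (\<alpha>-1)" for n
  define x where "x n = (t n)^2 * q (t n)" for n
  have al: "\<alpha> < 1" by (simp add: \<alpha>_def)
  define b where "b n = - ((\<tau>s n)^2 * s)" for n
  have qt: "((\<lambda>n. q (t n)) \<longlongrightarrow> s) sequentially"
    using seq_common(1)[of \<alpha> \<tau>s R q s] al bd qc qs unfolding t_def by simp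
  have x0: "(x \<longlongrightarrow> 0) sequentially"
    using seq_common(2)[of \<alpha> \<tau>s R q s] al bd qc qs unfolding t_def x_def by simp
  have "((\<lambda>n. q (t n) - s) \<longlongrightarrow> s - s) sequentially"
    by (intro tendsto_intros qt)
  then have "((\<lambda>n. (\<tau>s n)^2 * (q (t n) - s)) \<longlongrightarrow> 0) sequentially"
    using bdd_zero[OF sq_ev[OF bd]] by simp
  moreover have "eventually (\<lambda>n. (\<tau>s n)^2 * (q (t n) - s) = real n * x n + b n) sequentially"
    using eventually_gt_at_top[of 0]
  proof eventually_elim
    case (elim n)
    have "real n * x n = (\<tau>s n)^2 * real n powr (2*\<alpha> - 1) * q (t n)"
      unfolding x_def t_def by (rule nx_id[OF elim])
    then show ?case using elim by (simp add: algebra_simps \<alpha>_def b_def)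
  qed
  ultimately have "((\<lambda>n. real n * x n + b n) \<longlongrightarrow> 0) sequentially"
    using tendsto_cong by fastforce
  moreover have "eventually (\<lambda>n. \<bar>b n\<bar> \<le> R^2 * \<bar>s\<bar>) sequentially"
    by (intro always_eventually allI) (auto simp: abs_mult b_def intro!: mult_right_mono sq_bound bd)
  ultimately have "((\<lambda>n. (1 - x n) ^ n - exp (b n)) \<longlongrightarrow> 0) sequentially"
    using log_lemma[OF x0, of "\<lambda>n. real n * x n" b "R^2 * \<bar>s\<bar>"] by simp
  then show "((\<lambda>n. p (\<tau>s n * real n powr (1/2 - 1)) ^ n - exp (- ((\<tau>s n)^2) * s)) \<longlongrightarrow> 0) sequentially"
    by (simp add: pq x_def t_def \<alpha>_def b_def)
qed

lemma part_iii:
  fixes p q :: "real \<Rightarrow> real"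
  assumes pq: "\<And>t. p t = 1 - t^2 * q t" and qc: "isCont q 0" and qs: "q 0 = s"
    and p0: "\<And>t. 0 \<le> p t" and sp: "s > 0"
    and al1: "1/2 < \<alpha>" and al: "\<alpha> < 1" and K: "compact K" and K0: "0 \<notin> K"
  shows "uniform_limit K (\<lambda>N \<tau>. p (\<tau> * real N powr (\<alpha> - 1)) ^ N) (\<lambda>\<tau>. 0) sequentially"
proof (rule unif_seq)
  obtain R where R: "\<And>\<tau>. \<tau> \<in> K \<Longrightarrow> \<bar>\<tau>\<bar> \<le> R" using compact_bound[OF K] by blast
  have "open (- K)" using compact_imp_closed[OF K] by (simp add: open_Compl)
  then obtain m where m: "m > 0" "ball 0 m \<subseteq> - K"
    using K0 open_contains_ball by blast
  have mK: "\<And>\<tau>. \<tau> \<in> K \<Longrightarrow> m \<le> \<bar>\<tau>\<bar>"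
    using m by (force simp: dist_real_def)
  fix \<tau>s :: "nat \<Rightarrow> real" assume inK: "\<And>n. \<tau>s n \<in> K"
  have bd: "\<And>n. \<bar>\<tau>s n\<bar> \<le> R" using R inK by blast
  have bm: "\<And>n. m^2 \<le> (\<tau>s n)^2"
    using mK[OF inK] m by (metis abs_le_square_iff abs_of_pos less_imp_le)
  define t where "t n = \<tau>s n * real n powr (\<alpha>-1)" for n
  define x where "x n = (t n)^2 * q (t n)" for n
  have qt: "((\<lambda>n. q (t n)) \<longlongrightarrow> s) sequentially"
    using seq_common(1)[of \<alpha> \<tau>s R q s] al bd qc qs unfolding t_def by simp
  have qev: "eventually (\<lambda>n. s/2 < q (t n)) sequentially"
    using order_tendstoD(1)[OF qt, of "s/2"] sp by simp
  define g where "g n = exp (- ((m^2 * (s/2)) * real n powr (2*\<alpha>-1)))" for n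
  have g0: "(g \<longlongrightarrow> 0) sequentially"
  proof -
    have "m^2 * (s/2) > 0" "2*\<alpha>-1 > 0" using m sp al1 by auto
    then show ?thesis unfolding g_def by (rule exp_powr_lim)
  qed
  show "((\<lambda>n. p (\<tau>s n * real n powr (\<alpha> - 1)) ^ n - 0) \<longlongrightarrow> 0) sequentially"
  proof (rule Lim_null_comparison[OF _ g0])
    show "eventually (\<lambda>n. norm (p (\<tau>s n * real n powr (\<alpha> - 1)) ^ n - 0) \<le> g n) sequentially"
      using qev eventually_gt_at_top[of 0]
    proof eventually_elim
      case (elim n)
      have pt: "p (t n) = 1 - x n" by (simp add: pq x_def)
      have "p (t n) ^ n \<le> exp (- x n) ^ n"
        by (rule power_mono) (use p0[of "t n"] pt exp_ge_add_one_self[of "- x n"] in auto)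
      also have "\<dots> = exp (- (real n * x n))"
        by (simp add: exp_of_nat_mult[symmetric])
      also have "real n * x n = (\<tau>s n)^2 * real n powr (2*\<alpha>-1) * q (t n)"
        unfolding x_def t_def by (rule nx_id[OF elim(2)])
      also have "exp (- ((\<tau>s n)^2 * real n powr (2*\<alpha>-1) * q (t n))) \<le> g n"
        unfolding g_def
      proof (subst exp_le_cancel_iff, rule le_imp_neg_le)
        have "m^2 * real n powr (2*\<alpha>-1) * (s/2) \<le> (\<tau>s n)^2 * real n powr (2*\<alpha>-1) * q (t n)"
          using elim(1) sp bm[of n] by (intro mult_mono) auto
        then show "m\<^sup>2 * (s / 2) * real n powr (2 * \<alpha> - 1) \<le> (\<tau>s n)\<^sup>2 * real n powr (2 * \<alpha> - 1) * q (t n)"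
          by (simp add: algebra_simps)
      qed
      finally show ?case using p0[of "t n"] by (simp add: t_def)
    qed
  qed
qed


lemma expansion:
  fixes \<phi> :: "real \<Rightarrow> 'a::chilbert_space"
  assumes n1: "\<And>t. norm (\<phi> t) = 1" and phi0: "\<phi> 0 = \<psi>"
    and dv: "(\<phi> has_vector_derivative v) (at 0)"
  shows "((\<lambda>t. (1 - (cmod (cinner \<psi> (\<phi> t)))^2) / t^2) \<longlongrightarrow> (norm v)^2 - (Im (cinner \<psi> v))^2) (at 0)"
proof -
  define Dq where "Dq t = scaleR (1/t) (\<phi> t - \<psi>)" for t
  have ev: "eventually (\<lambda>t::real. t \<noteq> 0) (at 0)"
    by (simp add: eventually_at_filter)
  have "((\<lambda>h. norm (\<phi> (0 + h) - \<phi> 0 - h *\<^sub>R v) / norm h) \<longlongrightarrow> 0) (at 0)"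
    using dv unfolding has_vector_derivative_def has_derivative_at by blast
  moreover have "eventually (\<lambda>h. norm (\<phi> (0 + h) - \<phi> 0 - h *\<^sub>R v) / norm h = norm (Dq h - v)) (at 0)"
    using ev
  proof eventually_elim
    case (elim h)
    have "Dq h - v = scaleR (1/h) (\<phi> h - \<psi> - h *\<^sub>R v)"
      using elim by (simp add: Dq_def scaleR_diff_right)
    then show ?case using elim phi0 by (simp add: divide_inverse mult.commute)
  qed
  ultimately have "((\<lambda>h. norm (Dq h - v)) \<longlongrightarrow> 0) (at 0)"
    using tendsto_cong by fastforce
  then have D: "(Dq \<longlongrightarrow> v) (at 0)"
    by (simp add: tendsto_norm_zero_iff Lim_null[of Dq v])
  define f where "f t = cinner \<psi> (\<phi> t)" for t
  define A where "A t = norm (Dq t)^2 / 2" for t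
  define B where "B t = Im (cinner \<psi> (Dq t))" for t
  have psi1: "cinner \<psi> \<psi> = 1" using n1[of 0] phi0 by (simp add: cinner_self)
  have "((\<lambda>t. 2 * A t - t^2 * (A t)^2 - (B t)^2) \<longlongrightarrow>
        2 * (norm v^2/2) - 0^2 * (norm v^2/2)^2 - (Im (cinner \<psi> v))^2) (at 0)"
    unfolding A_def B_def
    by (intro tendsto_intros D tendsto_Im_cinner tendsto_ident_at) auto
  then have lim: "((\<lambda>t. 2 * A t - t^2 * (A t)^2 - (B t)^2) \<longlongrightarrow> (norm v)^2 - (Im (cinner \<psi> v))^2) (at 0)"
    by simp
  have "eventually (\<lambda>t. 2 * A t - t^2 * (A t)^2 - (B t)^2 = (1 - (cmod (cinner \<psi> (\<phi> t)))^2) / t^2) (at 0)"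
    using ev
  proof eventually_elim
    case (elim t)
    have nD: "norm (Dq t) = norm (\<phi> t - \<psi>) / \<bar>t\<bar>"
      by (simp add: Dq_def)
    have "norm (\<phi> t - \<psi>)^2 = 2 - 2 * Re (f t)"
      using norm_diff_sq[of "\<phi> t" \<psi>] n1[of t] n1[of 0] phi0 Re_cinner_sym[of "\<phi> t" \<psi>]
      by (simp add: f_def)
    then have ReA: "Re (f t) = 1 - t^2 * A t"
      using elim unfolding A_def nD by (simp add: power_divide field_simps)
    have "cinner \<psi> (Dq t) = complex_of_real (1/t) * (f t - 1)"
      by (simp add: Dq_def scaleR_scaleC cinner_scaleC_right cinner_diff_right psi1 f_def)
    then have ImB: "Im (f t) = t * B t"
      using elim unfolding B_def by simp
    have "(cmod (f t))^2 = (1 - t^2 * A t)^2 + (t * B t)^2"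
      by (simp add: cmod_power2 ReA ImB)
    then show ?case
      using elim unfolding f_def[symmetric] by (simp add: field_simps power2_eq_square)
  qed
  with lim show ?thesis using tendsto_cong by fastforce
qed

theorem theorem1:
  fixes hbar :: real and D :: "'a::chilbert_space set" and H :: "'a \<Rightarrow> 'a"
    and U :: "real \<Rightarrow> 'a \<Rightarrow> 'a" and \<psi> :: 'a
  assumes "separable_space TYPE('a)"
    and "self_adjoint D H"
    and "hbar > 0"
    and "is_evolution hbar D H U"
    and "\<psi> \<in> D" and "norm \<psi> = 1"
  shows "(\<forall>\<alpha> K. 0 \<le> \<alpha> \<and> \<alpha> < 1/2 \<and> compact K \<longrightarrow>
            uniform_limit K (\<lambda>N \<tau>. pN U \<psi> \<alpha> N \<tau>) (\<lambda>\<tau>. 1) sequentially)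
       \<and> (\<forall>K. compact K \<longrightarrow>
            uniform_limit K (\<lambda>N \<tau>. pN U \<psi> (1/2) N \<tau>)
              (\<lambda>\<tau>. exp (- (\<tau>^2) * ((Re (cinner (H \<psi>) (H \<psi>)) - (Re (cinner \<psi> (H \<psi>)))^2) / hbar^2)))
              sequentially)
       \<and> (\<forall>\<alpha> K. 1/2 < \<alpha> \<and> \<alpha> < 1 \<and> compact K \<and> K \<subseteq> - {0} \<and>
              \<not> (\<exists>c. H \<psi> = scaleC c \<psi>) \<longrightarrow>
            uniform_limit K (\<lambda>N \<tau>. pN U \<psi> \<alpha> N \<tau>) (\<lambda>\<tau>. 0) sequentially)"
proof -
  note ev = assms(4)[unfolded is_evolution_def]
  have hb: "hbar > 0" by fact
  define v where "v = scaleC (- \<i> / complex_of_real hbar) (H \<psi>)"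
  have dv: "((\<lambda>t. U t \<psi>) has_vector_derivative v) (at 0)"
    using ev assms(5) unfolding v_def by blast
  have n1: "norm (U t \<psi>) = 1" for t
  proof -
    have "cinner (U t \<psi>) (U t \<psi>) = cinner \<psi> \<psi>"
      using ev unfolding unitary_def by blast
    then show ?thesis using assms(6) by (simp add: norm_cinner)
  qed
  have U0: "U 0 \<psi> = \<psi>" using ev by simp
  define s where "s = (Re (cinner (H \<psi>) (H \<psi>)) - (Re (cinner \<psi> (H \<psi>)))^2) / hbar^2"
  have sv: "(norm v)^2 - (Im (cinner \<psi> v))^2 = s"
  proof -
    have "(norm v)^2 = (norm (H \<psi>))^2 / hbar^2"
      using hb by (simp add: v_def norm_scaleC norm_divide power_divide)
    moreover have "Im (cinner \<psi> v) = - Re (cinner \<psi> (H \<psi>)) / hbar"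
      by (simp add: v_def cinner_scaleC_right Im_divide_of_real)
    ultimately show ?thesis
      by (simp add: s_def norm_sq power_divide diff_divide_distrib)
  qed
  define p where "p = surv_prob U \<psi>"
  define q where "q t = (if t = 0 then s else (1 - p t) / t^2)" for t
  have exp_lim: "((\<lambda>t. (1 - p t) / t^2) \<longlongrightarrow> s) (at 0)"
    using expansion[of "\<lambda>t. U t \<psi>", OF n1 U0 dv] sv by (simp add: p_def surv_prob_def)
  have pq: "p t = 1 - t^2 * q t" for t
  proof (cases "t = 0")
    case True
    then show ?thesis using U0 assms(6) by (simp add: p_def q_def surv_prob_def cinner_self)
  qed (simp add: q_def)
  have qs: "q 0 = s" by (simp add: q_def)
  have qc: "isCont q 0"
  proof -
    have "eventually (\<lambda>t::real. t \<noteq> 0) (at 0)" by (simp add: eventually_at_filter)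
    then have "eventually (\<lambda>t. (1 - p t) / t^2 = q t) (at 0)"
      by eventually_elim (simp add: q_def)
    then have "(q \<longlongrightarrow> s) (at 0)" using exp_lim tendsto_cong by fastforce
    then show ?thesis by (simp add: isCont_def qs)
  qed
  have p0: "0 \<le> p t" for t by (simp add: p_def surv_prob_def)
  have pN_eq: "(\<lambda>N \<tau>. pN U \<psi> \<alpha> N \<tau>) = (\<lambda>N \<tau>. p (\<tau> * real N powr (\<alpha> - 1)) ^ N)" for \<alpha>
    by (simp add: pN_def p_def)
  have spos: "s > 0" if ne: "\<not> (\<exists>c. H \<psi> = scaleC c \<psi>)"
  proof -
    define r where "r = Re (cinner \<psi> (H \<psi>))"
    have "norm (H \<psi> - scaleC (complex_of_real r) \<psi>)^2
          = norm (H \<psi>)^2 + r^2 - 2 * r * Re (cinner (H \<psi>) \<psi>)"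
      using assms(6) by (simp add: norm_diff_sq norm_scaleC cinner_scaleC_right power_mult_distrib)
    also have "Re (cinner (H \<psi>) \<psi>) = r" unfolding r_def by (rule Re_cinner_sym)
    finally have eq0: "norm (H \<psi> - scaleC (complex_of_real r) \<psi>)^2 = norm (H \<psi>)^2 + r^2 - 2 * r * r" .
    have nH: "norm (H \<psi>)^2 = Re (cinner (H \<psi>) (H \<psi>))" by (rule norm_sq)
    have hs: "hbar^2 * s = Re (cinner (H \<psi>) (H \<psi>)) - r^2" using hb by (simp add: s_def r_def)
    have rr: "2 * r * r = 2 * r^2" by (simp add: power2_eq_square)
    have eq: "norm (H \<psi> - scaleC (complex_of_real r) \<psi>)^2 = hbar^2 * s"
      using eq0 nH hs rr by linarith
    have "H \<psi> - scaleC (complex_of_real r) \<psi> \<noteq> 0" using ne by auto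
    then have "norm (H \<psi> - scaleC (complex_of_real r) \<psi>)^2 > 0" by simp
    with eq hb show ?thesis by (simp add: zero_less_mult_iff)
  qed
  show ?thesis
  proof (intro conjI allI impI)
    fix \<alpha> :: real and K :: "real set"
    assume a: "0 \<le> \<alpha> \<and> \<alpha> < 1/2 \<and> compact K"
    show "uniform_limit K (\<lambda>N \<tau>. pN U \<psi> \<alpha> N \<tau>) (\<lambda>\<tau>. 1) sequentially"
      unfolding pN_eq using part_i[OF pq qc qs] a by blast
  next
    fix K :: "real set" assume "compact K"
    then show "uniform_limit K (\<lambda>N \<tau>. pN U \<psi> (1/2) N \<tau>)
              (\<lambda>\<tau>. exp (- (\<tau>^2) * ((Re (cinner (H \<psi>) (H \<psi>)) - (Re (cinner \<psi> (H \<psi>)))^2) / hbar^2)))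
              sequentially"
      unfolding pN_eq s_def[symmetric] using part_ii[OF pq qc qs] by blast
  next
    fix \<alpha> :: real and K :: "real set"
    assume a: "1/2 < \<alpha> \<and> \<alpha> < 1 \<and> compact K \<and> K \<subseteq> - {0} \<and> \<not> (\<exists>c. H \<psi> = scaleC c \<psi>)"
    then have "0 \<notin> K" by auto
    then show "uniform_limit K (\<lambda>N \<tau>. pN U \<psi> \<alpha> N \<tau>) (\<lambda>\<tau>. 0) sequentially"
      unfolding pN_eq using part_iii[OF pq qc qs p0 spos] a by blast
  qed
qed

end
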